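(* Fix integers $1\le m\le n$ and $f\in[0,1/2]$. Then $q\mapsto q^2/v(q)$ is an increasing function of the integer $q$ on $1\le q\le 2^n$.
   Context: For $n,m$, $f$ and integer $1\le q\le 2^n+1$ define $w^*(n,q)=\max\{w\ge0:\sum_{j=1}^w\binom{n}{j}\le q-1\}$, $r(n,q)=q-1-\sum_{w=1}^{w^*(n,q)}\binom{n}{w}$, and $$(q-1)\,\epsilon(n,m,q,f)=\sum_{w=1}^{w^*(n,q)}\binom{n}{w}\frac{1}{2^m}(1+(1-2f)^w)^m+\frac{r(n,q)}{2^m}(1+(1-2f)^{w^*(n,q)+1})^m$$ (so $\epsilon(n,m,q,f)$ is this bracket divided by $q-1$ when $q\ge2$). Define $$v(q)=\frac{q}{2^m}\left(1+\epsilon(n,m,q,f)\cdot(q-1)-\frac{q}{2^m}\right).$$ *)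

theory Defs
  imports Complex_Main
begin

definition wstar :: "nat \<Rightarrow> nat \<Rightarrow> nat" where
  "wstar n q = Max {w. w \<le> n \<and> (\<Sum>j=1..w. n choose j) \<le> q - 1}"

definition rr :: "nat \<Rightarrow> nat \<Rightarrow> nat" where
  "rr n q = q - 1 - (\<Sum>w=1..wstar n q. n choose w)"

text \<open>the bracket, equal to (q-1) times epsilon\<close>
definition eps_mul :: "nat \<Rightarrow> nat \<Rightarrow> nat \<Rightarrow> real \<Rightarrow> real" where
  "eps_mul n m q f =
     (\<Sum>w=1..wstar n q. real (n choose w) * (1 / 2^m) * (1 + (1 - 2*f)^w)^m)
     + real (rr n q) / 2^m * (1 + (1 - 2*f)^(wstar n q + 1))^m"

definition vfun :: "nat \<Rightarrow> nat \<Rightarrow> real \<Rightarrow> nat \<Rightarrow> real" where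
  "vfun n m f q = real q / 2^m * (1 + eps_mul n m q f - real q / 2^m)"

end

theory Submission
  imports Defs
begin

definition tm :: "nat \<Rightarrow> real \<Rightarrow> nat \<Rightarrow> real" where
  "tm m f w = 1 / 2^m * (1 + (1 - 2*f)^w)^m"

lemma eps_mul_alt:
  "eps_mul n m q f = (\<Sum>w=1..wstar n q. real (n choose w) * tm m f w)
      + real (rr n q) * tm m f (wstar n q + 1)"
  unfolding eps_mul_def tm_def by (simp add: mult.assoc)

lemma T_mono: "w \<le> w' \<Longrightarrow> (\<Sum>j=1..w. n choose j) \<le> (\<Sum>j=1..w'. (n::nat) choose j)"
  by (rule sum_mono2) auto

lemma T_full: "(\<Sum>j=1..n. n choose j) = 2^n - (1::nat)"
proof -
  have "(\<Sum>j\<le>n. n choose j) = (2::nat)^n" by (rule choose_row_sum)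
  moreover have "(\<Sum>j\<le>n. n choose j) = (n choose 0) + (\<Sum>j=1..n. n choose j)"
    by (simp add: atMost_atLeast0 sum.atLeast_Suc_atMost)
  ultimately show ?thesis by simp
qed

lemma T_Suc: "(\<Sum>j=1..Suc w. n choose j) = (\<Sum>j=1..w. n choose j) + (n choose Suc w)"
  by simp

lemma wstar_props:
  shows "wstar n q \<le> n" "(\<Sum>j=1..wstar n q. n choose j) \<le> q - 1"
    "wstar n q < n \<Longrightarrow> q - 1 < (\<Sum>j=1..wstar n q + 1. n choose j)"
proof -
  define S where "S = {w. w \<le> n \<and> (\<Sum>j=1..w. n choose j) \<le> q - 1}"
  have fin: "finite S" unfolding S_def by (rule finite_subset[of _ "{..n}"]) auto
  have ne: "0 \<in> S" unfolding S_def by simp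
  have ws: "wstar n q = Max S" unfolding wstar_def S_def by simp
  have inS: "Max S \<in> S" using fin ne Max_in by blast
  then show "wstar n q \<le> n" "(\<Sum>j=1..wstar n q. n choose j) \<le> q - 1"
    unfolding ws S_def by auto
  show "q - 1 < (\<Sum>j=1..wstar n q + 1. n choose j)" if "wstar n q < n"
  proof (rule ccontr)
    assume "\<not> ?thesis"
    then have "wstar n q + 1 \<in> S" using that unfolding S_def by auto
    then have "wstar n q + 1 \<le> Max S" using fin by simp
    then show False using ws by simp
  qed
qed

lemma wstar_eqI:
  assumes "W \<le> n" "(\<Sum>j=1..W. n choose j) \<le> q - 1"
    "W = n \<or> q - 1 < (\<Sum>j=1..W + 1. n choose j)"
  shows "wstar n q = W"
proof -
  define S where "S = {w. w \<le> n \<and> (\<Sum>j=1..w. n choose j) \<le> q - 1}"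
  have fin: "finite S" unfolding S_def by (rule finite_subset[of _ "{..n}"]) auto
  have ws: "wstar n q = Max S" unfolding wstar_def S_def by simp
  have "Max S = W"
  proof (rule Max_eqI[OF fin])
    show "W \<in> S" using assms unfolding S_def by auto
    fix y assume y: "y \<in> S"
    show "y \<le> W"
    proof (rule ccontr)
      assume "\<not> y \<le> W"
      then have "W + 1 \<le> y" by simp
      then have "(\<Sum>j=1..W+1. n choose j) \<le> (\<Sum>j=1..y. n choose j)" by (rule T_mono)
      moreover have "y \<le> n" "(\<Sum>j=1..y. n choose j) \<le> q - 1" using y unfolding S_def by auto
      ultimately show False using assms(3) \<open>W + 1 \<le> y\<close> by linarith
    qed
  qed
  then show ?thesis using ws by simp
qed

lemma wstar_mono: "q \<le> q' \<Longrightarrow> wstar n q \<le> wstar n q'"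
  unfolding wstar_def
  by (rule Max_mono) (auto intro: finite_subset[of _ "{..n}"])

lemma eps_succ:
  assumes "1 \<le> q" "q < 2^n"
  shows "eps_mul n m (q+1) f = eps_mul n m q f + tm m f (wstar n q + 1)"
proof -
  define W where "W = wstar n q"
  have Wn: "W \<le> n" and TW: "(\<Sum>j=1..W. n choose j) \<le> q - 1" using wstar_props W_def by auto
  have "W \<noteq> n"
  proof
    assume "W = n" then have "2^n - (1::nat) \<le> q - 1" using TW T_full by simp
    then show False using assms by simp
  qed
  then have Wlt: "W < n" using Wn by simp
  then have Tlt: "q - 1 < (\<Sum>j=1..W. n choose j) + (n choose Suc W)"
    using wstar_props(3)[of n q] W_def by simp
  have cpos: "n choose Suc W > 0" using Wlt by simp
  let ?S = "\<lambda>W. (\<Sum>w=1..W. real (n choose w) * tm m f w)"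
  have key: "eps_mul n m (q+1) f = ?S W + real (rr n q + 1) * tm m f (W + 1)"
  proof (cases "q < (\<Sum>j=1..W. n choose j) + (n choose Suc W)")
    case True
    have w1: "wstar n (q+1) = W"
      using wstar_eqI[of W n "q+1"] Wn TW True by simp
    have "rr n (q+1) = rr n q + 1" unfolding rr_def using w1 W_def TW assms by simp
    then show ?thesis unfolding eps_mul_alt using w1 W_def by simp
  next
    case False
    then have qe: "q = (\<Sum>j=1..W. n choose j) + (n choose Suc W)" using Tlt assms by linarith
    have "W + 1 = n \<or> q < (\<Sum>j=1..W+1+1. n choose j)"
    proof (cases "W + 1 = n")
      case False
      then have "n choose Suc (Suc W) > 0" using Wlt by simp
      then show ?thesis using qe by simp
    qed simp
    then have w1: "wstar n (q+1) = W + 1"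
      using wstar_eqI[of "W+1" n "q+1"] Wlt qe by simp
    have "rr n (q+1) = 0" unfolding rr_def using w1 qe by simp
    moreover have "rr n q + 1 = n choose Suc W" unfolding rr_def using W_def qe cpos by simp
    ultimately show ?thesis unfolding eps_mul_alt using w1 by simp
  qed
  have e: "eps_mul n m q f = ?S W + real (rr n q) * tm m f (W + 1)"
    unfolding W_def by (rule eps_mul_alt)
  show ?thesis unfolding key e W_def[symmetric] by (simp add: algebra_simps)
qed

lemma eps_one: assumes "1 \<le> n" shows "eps_mul n m 1 f = 0"
proof -
  have "wstar n 1 = 0" using wstar_eqI[of 0 n 1] assms by simp
  then show ?thesis unfolding eps_mul_def rr_def by simp
qed

lemma eps_sum:
  assumes "1 \<le> n" "1 \<le> q" "q \<le> 2^n"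
  shows "eps_mul n m q f = (\<Sum>k=1..<q. tm m f (wstar n k + 1))"
  using assms(2,3)
proof (induction q rule: dec_induct)
  case base then show ?case using eps_one[OF assms(1)] by simp
next
  case (step q)
  then show ?case using eps_succ[of q n m f] by simp
qed

lemma tm_bounds:
  assumes "0 \<le> f" "f \<le> 1/2"
  shows "tm m f w \<le> 1" "1 / 2^m \<le> tm m f w"
proof -
  have c0: "0 \<le> (1 - 2*f)^w" using assms by simp
  have c1: "(1 - 2*f)^w \<le> 1" using assms by (intro power_le_one) auto
  have "(1 + (1 - 2*f)^w)^m \<le> 2^m" using c0 c1 by (intro power_mono) auto
  then show "tm m f w \<le> 1" unfolding tm_def by simp
  have "1 \<le> (1 + (1 - 2*f)^w)^m" using c0 by (intro one_le_power) auto
  then show "1 / 2^m \<le> tm m f w" unfolding tm_def by (simp add: divide_right_mono)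
qed

lemma tm_anti:
  assumes "0 \<le> f" "f \<le> 1/2" "w \<le> w'"
  shows "tm m f w' \<le> tm m f w"
proof -
  have "(1 - 2*f)^w' \<le> (1 - 2*f)^w" using assms by (intro power_decreasing) auto
  moreover have "0 \<le> (1 - 2*f)^w'" using assms by simp
  ultimately have "(1 + (1 - 2*f)^w')^m \<le> (1 + (1 - 2*f)^w)^m" by (intro power_mono) auto
  then show ?thesis unfolding tm_def by (simp add: divide_right_mono)
qed

lemma step_ineq:
  fixes n m :: nat and f :: real
  assumes "1 \<le> m" and "m \<le> n" and "0 \<le> f" and "f \<le> 1/2"
    and q: "1 \<le> q" "q < 2^n"
  shows "real q ^ 2 / vfun n m f q \<le> real (q+1) ^ 2 / vfun n m f (q+1)"
proof -
  define M :: real where "M = 2^m"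
  have M2: "M \<ge> 2" unfolding M_def using assms(1)
    by (metis power_increasing power_one_right numeral_le_one_iff semiring_norm(69) zero_le_numeral order_trans[OF _ power_increasing[of 1 m "2::real"]] one_le_numeral)
  define h where "h k = tm m f (wstar n k + 1)" for k
  define D where "D k = 1 + eps_mul n m k f - real k / M" for k
  have n1: "1 \<le> n" using assms by simp
  have hq: "1/M \<le> h q" "h q \<le> 1" unfolding h_def M_def using tm_bounds assms by auto
  have hk: "h q \<le> h k" if "k \<le> q" for k
    unfolding h_def using tm_anti assms wstar_mono[OF that, of n] by simp
  have Dq: "D q = (1 - 1/M) + (\<Sum>k=1..<q. (h k - 1/M))"
  proof -
    have "(\<Sum>k=1..<q. (h k - 1/M)) = eps_mul n m q f - real (q - 1) / M"
      using eps_sum[OF n1 q(1)] q by (simp add: sum_subtractf h_def)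
    moreover have "real (q - 1) / M = real q / M - 1/M" using q by (simp add: of_nat_diff diff_divide_distrib)
    ultimately show ?thesis unfolding D_def by linarith
  qed
  have "(\<Sum>k=1..<q. (h q - 1/M)) \<le> (\<Sum>k=1..<q. (h k - 1/M))"
    by (intro sum_mono) (simp add: hk)
  then have Dlow: "D q \<ge> (1 - 1/M) + real (q - 1) * (h q - 1/M)" using Dq by simp
  have qm1: "real (q - 1) = real q - 1" using q by (simp add: of_nat_diff)
  have a1: "0 \<le> real (q - 1) * (h q - 1/M)" using hq by simp
  have a2: "1/M < 1" using M2 by simp
  have Dpos: "D q > 0" using Dlow a1 a2 by linarith
  have Dsucc: "D (q+1) = D q + (h q - 1/M)"
    unfolding D_def h_def using eps_succ[OF q, of m f] by (simp add: add_divide_distrib)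
  have key: "real q * (h q - 1/M) \<le> D q"
  proof -
    have "real q * (h q - 1/M) = (h q - 1/M) + (real q - 1) * (h q - 1/M)" by algebra
    also have "\<dots> \<le> (1 - 1/M) + (real q - 1) * (h q - 1/M)" using hq by simp
    finally show ?thesis using Dlow qm1 by simp
  qed
  have Dpos1: "D (q+1) > 0" using Dsucc Dpos hq by simp
  have v1: "vfun n m f k = real k / M * D k" for k
    unfolding vfun_def D_def M_def by simp
  have Mpos: "M > 0" using M2 by simp
  have qpos: "real q > 0" using q by simp
  have e1: "real q ^ 2 / vfun n m f q = real q * M / D q"
    unfolding v1 using qpos Mpos Dpos by (simp add: field_simps power2_eq_square)
  have e2: "real (q+1) ^ 2 / vfun n m f (q+1) = real (q+1) * M / D (q+1)"
  proof -
    have p: "real (q+1) > 0" by simp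
    show ?thesis unfolding v1 using p Mpos Dpos1 by (simp only: power2_eq_square) (simp add: field_simps del: of_nat_Suc)
  qed
  have "real q * D (q+1) = real q * D q + real q * (h q - 1/M)" unfolding Dsucc by (simp add: distrib_left)
  also have "\<dots> \<le> real q * D q + D q" using key by simp
  also have "\<dots> = real (q+1) * D q" by (simp add: distrib_right)
  finally have "real q * D (q+1) \<le> real (q+1) * D q" .
  then have "real q * M * D (q+1) \<le> real (q+1) * M * D q" using Mpos
    by (metis mult.commute mult.left_commute mult_le_cancel_left_pos)
  then show ?thesis unfolding e1 e2 using Dpos Dpos1 by (simp add: divide_simps)
qed

theorem lemma2:
  fixes n m :: nat and f :: real
  assumes "1 \<le> m" and "m \<le> n" and "0 \<le> f" and "f \<le> 1/2"
  shows "\<forall>q q'. 1 \<le> q \<longrightarrow> q \<le> q' \<longrightarrow> q' \<le> 2^n \<longrightarrow>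
           real q ^ 2 / vfun n m f q \<le> real q' ^ 2 / vfun n m f q'"
proof (intro allI impI)
  fix q q' :: nat
  assume q: "1 \<le> q" and qq: "q \<le> q'" and q': "q' \<le> 2^n"
  show "real q ^ 2 / vfun n m f q \<le> real q' ^ 2 / vfun n m f q'"
    using qq q'
  proof (induction q' rule: dec_induct)
    case base then show ?case by simp
  next
    case (step k)
    have "real k ^ 2 / vfun n m f k \<le> real (k+1) ^ 2 / vfun n m f (k+1)"
      using step_ineq[OF assms, of k] step q by simp
    then show ?case using step by simp
  qed
qed

end
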